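(* Let $A$ be a pro-$C^*$-algebra, $H$ a Hilbert space, and let $\rho=[\rho_{ij}]_{i,j=1}^n$ and $\theta=[\theta_{ij}]_{i,j=1}^n$ be completely $n$-positive linear maps from $A$ to $L(H)$ with Stinespring representations $(\Phi_\rho,H_\rho,V_{\rho,1},\dots,V_{\rho,n})$ and $(\Phi_\theta,H_\theta,V_{\theta,1},\dots,V_{\theta,n})$. If $\theta\le\rho$, then there is $W\in L(H_\rho,H_\theta)$ such that (1) $\|W\|\le1$; (2) $WV_{\rho,i}=V_{\theta,i}$ for all $i\in\{1,\dots,n\}$; (3) $W\Phi_\rho(a)=\Phi_\theta(a)W$ for all $a\in A$.
   Context: A pro-$C^*$-algebra is a complete Hausdorff topological $*$-algebra over $\mathbb{C}$ whose topology is determined by its continuous $C^*$-seminorms. A representation of $A$ on a Hilbert space $K$ is a continuous $*$-morphism $A\to L(K)$. An $n\times n$ matrix $[\rho_{ij}]$ of continuous linear maps $A\to L(H)$ is completely $n$-positive if the map $M_n(A)\to M_n(L(H))$, $[a_{ij}]\mapsto[\rho_{ij}(a_{ij})]$, is completely positive; $\theta\le\rho$ means $\rho-\theta$ is completely $n$-positive. The Stinespring representation of $\rho$ consists of a representation $\Phi_\rho$ of $A$ on a Hilbert space $H_\rho$ and $V_{\rho,1},\dots,V_{\rho,n}\in L(H,H_\rho)$ with $\rho_{ij}(a)=V_{\rho,i}^*\Phi_\rho(a)V_{\rho,j}$ for all $a,i,j$ and $\{\Phi_\rho(a)V_{\rho,i}\xi:a\in A,\xi\in H,1\le i\le n\}$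 spanning a dense subspace of $H_\rho$; it exists and is unique up to unitary equivalence. *)

theory Defs
  imports "HOL-Analysis.Analysis" "HOL-Library.Complex_Order"
begin

class complex_vector = ab_group_add +
  fixes scaleC :: "complex \<Rightarrow> 'a \<Rightarrow> 'a" (infixr \<open>*\<^sub>C\<close> 75)
  assumes scaleC_add_right: "a *\<^sub>C (x + y) = a *\<^sub>C x + a *\<^sub>C y"
    and scaleC_add_left: "(a + b) *\<^sub>C x = a *\<^sub>C x + b *\<^sub>C x"
    and scaleC_scaleC: "a *\<^sub>C (b *\<^sub>C x) = (a * b) *\<^sub>C x"
    and scaleC_one: "1 *\<^sub>C x = x"

text \<open>Complex inner product space; the inner product is conjugate-linear in the
first and linear in the second argument.\<close>
class complex_inner = complex_vector + real_normed_vector +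
  fixes cinner :: "'a \<Rightarrow> 'a \<Rightarrow> complex"
  assumes scaleR_scaleC: "scaleR r x = complex_of_real r *\<^sub>C x"
    and cinner_commute: "cinner x y = cnj (cinner y x)"
    and cinner_add_right: "cinner x (y + z) = cinner x y + cinner x z"
    and cinner_scaleC_right: "cinner x (c *\<^sub>C y) = c * cinner x y"
    and cinner_ge_zero: "0 \<le> cinner x x"
    and norm_eq_sqrt_cinner: "norm x = sqrt (Re (cinner x x))"

class chilbert_space = complex_inner + complete_space

definition bounded_clinear :: "('a::complex_inner \<Rightarrow> 'b::complex_inner) \<Rightarrow> bool" where
  "bounded_clinear f \<longleftrightarrow>
     (\<forall>x y. f (x + y) = f x + f y) \<and> (\<forall>c x. f (c *\<^sub>C x) = c *\<^sub>C f x) \<and>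
     (\<exists>K. \<forall>x. norm (f x) \<le> norm x * K)"

definition cadjoint :: "('a::complex_inner \<Rightarrow> 'b::complex_inner) \<Rightarrow> 'b \<Rightarrow> 'a" where
  "cadjoint T = (SOME S. \<forall>x y. cinner (S y) x = cinner y (T x))"

definition cspan :: "'a::complex_vector set \<Rightarrow> 'a set" where
  "cspan S = {\<Sum>x\<in>F. c x *\<^sub>C x | F c. finite F \<and> F \<subseteq> S}"

class complex_algebra = complex_vector + ring +
  assumes mult_scaleC_left: "(a *\<^sub>C x) * y = a *\<^sub>C (x * y)"
    and mult_scaleC_right: "x * (a *\<^sub>C y) = a *\<^sub>C (x * y)"

class star_algebra = complex_algebra +
  fixes invol :: "'a \<Rightarrow> 'a"
  assumes invol_invol: "invol (invol x) = x"
    and invol_add: "invol (x + y) = invol x + invol y"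
    and invol_scaleC: "invol (a *\<^sub>C x) = cnj a *\<^sub>C invol x"
    and invol_mult: "invol (x * y) = invol y * invol x"

definition cstar_seminorm :: "('a::star_algebra \<Rightarrow> real) \<Rightarrow> bool" where
  "cstar_seminorm p \<longleftrightarrow>
     (\<forall>x y. p (x + y) \<le> p x + p y) \<and> (\<forall>c x. p (c *\<^sub>C x) = cmod c * p x) \<and>
     (\<forall>x y. p (x * y) \<le> p x * p y) \<and> (\<forall>x. p (invol x * x) = (p x)\<^sup>2)"

definition cont_cstar_seminorms :: "('a::{star_algebra,topological_space} \<Rightarrow> real) set" where
  "cont_cstar_seminorms = {p. cstar_seminorm p \<and> continuous_on UNIV p}"

text \<open>Completeness
is completeness of the uniform structure given by these seminorms, expressed with
Cauchy filters (equivalently Cauchy nets).\<close>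
definition pro_cstar_algebra :: "'a::{star_algebra,t2_space} itself \<Rightarrow> bool" where
  "pro_cstar_algebra (_ :: 'a itself) \<longleftrightarrow>
     continuous_on UNIV (\<lambda>z::'a \<times> 'a. fst z + snd z) \<and>
     continuous_on UNIV (\<lambda>z::complex \<times> 'a. fst z *\<^sub>C snd z) \<and>
     continuous_on UNIV (\<lambda>z::'a \<times> 'a. fst z * snd z) \<and>
     continuous_on UNIV (invol :: 'a \<Rightarrow> 'a) \<and>
     (\<forall>U::'a set. open U \<longleftrightarrow>
       (\<forall>x\<in>U. \<exists>P e. finite P \<and> P \<subseteq> cont_cstar_seminorms \<and> 0 < e \<and>
                  {y. \<forall>p\<in>P. p (y - x) < e} \<subseteq> U)) \<and>
     (\<forall>F :: 'a filter. F \<noteq> bot \<longrightarrow>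
       (\<forall>p\<in>cont_cstar_seminorms. \<forall>e>0. \<forall>\<^sub>F z in F \<times>\<^sub>F F. p (fst z - snd z) < e) \<longrightarrow>
       (\<exists>l. F \<le> nhds l))"

definition op_continuous :: "('a::topological_space \<Rightarrow> 'k::complex_inner \<Rightarrow> 'k) \<Rightarrow> bool" where
  "op_continuous \<Phi> \<longleftrightarrow>
     (\<forall>a0. \<forall>e>0. \<exists>U. open U \<and> a0 \<in> U \<and> (\<forall>a\<in>U. onorm (\<lambda>x. \<Phi> a x - \<Phi> a0 x) < e))"

definition cont_lin_map :: "('a::{star_algebra,t2_space} \<Rightarrow> 'k::chilbert_space \<Rightarrow> 'k) \<Rightarrow> bool" where
  "cont_lin_map \<Phi> \<longleftrightarrow>
     (\<forall>a. bounded_clinear (\<Phi> a)) \<and>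
     (\<forall>a b. \<Phi> (a + b) = (\<lambda>x. \<Phi> a x + \<Phi> b x)) \<and>
     (\<forall>c a. \<Phi> (c *\<^sub>C a) = (\<lambda>x. c *\<^sub>C \<Phi> a x)) \<and>
     op_continuous \<Phi>"

definition representation :: "('a::{star_algebra,t2_space} \<Rightarrow> 'k::chilbert_space \<Rightarrow> 'k) \<Rightarrow> bool" where
  "representation \<Phi> \<longleftrightarrow>
     cont_lin_map \<Phi> \<and>
     (\<forall>a b. \<Phi> (a * b) = \<Phi> a \<circ> \<Phi> b) \<and>
     (\<forall>a. \<Phi> (invol a) = cadjoint (\<Phi> a))"

text \<open>A matrix [rho i j], i,j in {1..n}, of continuous linear maps A \<rightarrow> L(H) is
completely n-positive if [a_ij] \<mapsto> [rho_ij(a_ij)] is completely positive, i.e. for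
every m its m-th amplification M_m(M_n(A)) \<rightarrow> M_m(M_n(L(H))) maps positive elements
(those of the form b* b) to positive operators on H^(mn). Entries of M_m(M_n(A))
are indexed by pairs (s,i), s in {1..m} (block), i in {1..n} (inside the block).\<close>
definition completely_n_positive ::
  "nat \<Rightarrow> (nat \<Rightarrow> nat \<Rightarrow> 'a::{star_algebra,t2_space} \<Rightarrow> 'h::chilbert_space \<Rightarrow> 'h) \<Rightarrow> bool" where
  "completely_n_positive n \<rho> \<longleftrightarrow>
     (\<forall>i\<in>{1..n}. \<forall>j\<in>{1..n}. cont_lin_map (\<rho> i j)) \<and>
     (\<forall>m::nat. \<forall>(b :: nat \<times> nat \<Rightarrow> nat \<times> nat \<Rightarrow> 'a) (\<xi> :: nat \<times> nat \<Rightarrow> 'h).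
        0 \<le> (\<Sum>p\<in>{1..m}\<times>{1..n}. \<Sum>q\<in>{1..m}\<times>{1..n}.
               cinner (\<xi> p)
                 (\<rho> (snd p) (snd q) (\<Sum>r\<in>{1..m}\<times>{1..n}. invol (b r p) * b r q) (\<xi> q))))"

definition cnp_le ::
  "nat \<Rightarrow> (nat \<Rightarrow> nat \<Rightarrow> 'a::{star_algebra,t2_space} \<Rightarrow> 'h::chilbert_space \<Rightarrow> 'h) \<Rightarrow>
   (nat \<Rightarrow> nat \<Rightarrow> 'a \<Rightarrow> 'h \<Rightarrow> 'h) \<Rightarrow> bool" where
  "cnp_le n \<theta> \<rho> \<longleftrightarrow> completely_n_positive n (\<lambda>i j a x. \<rho> i j a x - \<theta> i j a x)"

definition stinespring_rep ::
  "nat \<Rightarrow> (nat \<Rightarrow> nat \<Rightarrow> 'a::{star_algebra,t2_space} \<Rightarrow> 'h::chilbert_space \<Rightarrow> 'h) \<Rightarrow>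
   ('a \<Rightarrow> 'k::chilbert_space \<Rightarrow> 'k) \<Rightarrow> (nat \<Rightarrow> 'h \<Rightarrow> 'k) \<Rightarrow> bool" where
  "stinespring_rep n \<rho> \<Phi> V \<longleftrightarrow>
     representation \<Phi> \<and>
     (\<forall>i\<in>{1..n}. bounded_clinear (V i)) \<and>
     (\<forall>i\<in>{1..n}. \<forall>j\<in>{1..n}. \<forall>a. \<rho> i j a = cadjoint (V i) \<circ> \<Phi> a \<circ> V j) \<and>
     closure (cspan {\<Phi> a (V i \<xi>) | a i \<xi>. i \<in> {1..n}}) = UNIV"

end

theory Submission
  imports Defs
begin

interpretation cvs: vector_space "scaleC :: complex \<Rightarrow> 'a::complex_vector \<Rightarrow> 'a"
  by unfold_locales (simp_all add: scaleC_add_right scaleC_add_left scaleC_scaleC scaleC_one)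

thm cvs.scale_zero_left cvs.scale_zero_right cvs.scale_sum_right cvs.scale_right_diff_distrib cvs.scale_minus_right

lemma cinner_add_left: "cinner (x + y) (z::'a::complex_inner) = cinner x z + cinner y z"
  by (metis cinner_add_right cinner_commute complex_cnj_add)

lemma cinner_scaleC_left: "cinner (c *\<^sub>C x) (y::'a::complex_inner) = cnj c * cinner x y"
  by (metis cinner_commute cinner_scaleC_right complex_cnj_mult)

lemma cinner_zero_right[simp]: "cinner x (0::'a::complex_inner) = 0"
  using cinner_add_right[of x 0 0] by simp

lemma cinner_zero_left[simp]: "cinner (0::'a::complex_inner) x = 0"
  using cinner_add_left[of 0 0 x] by simp

lemma cinner_diff_right: "cinner x (y - z) = cinner x y - cinner x (z::'a::complex_inner)"
  by (metis add_diff_cancel_right' cinner_add_right diff_add_cancel)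

lemma cinner_diff_left: "cinner (x - y) z = cinner x z - cinner y (z::'a::complex_inner)"
  by (metis add_diff_cancel_right' cinner_add_left diff_add_cancel)

lemma cinner_minus_right: "cinner x (- y) = - cinner x (y::'a::complex_inner)"
  using cinner_diff_right[of x 0 y] by simp

lemma cinner_minus_left: "cinner (- x) y = - cinner x (y::'a::complex_inner)"
  using cinner_diff_left[of 0 x y] by simp

lemma cinner_sum_right: "cinner x (\<Sum>i\<in>A. f i) = (\<Sum>i\<in>A. cinner x (f i::'a::complex_inner))"
  by (induct A rule: infinite_finite_induct) (simp_all add: cinner_add_right)

lemma cinner_sum_left: "cinner (\<Sum>i\<in>A. f i) x = (\<Sum>i\<in>A. cinner (f i::'a::complex_inner) x)"
  by (induct A rule: infinite_finite_induct) (simp_all add: cinner_add_left)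

lemma cinner_self: "cinner x x = complex_of_real ((norm (x::'a::complex_inner))\<^sup>2)"
proof -
  have "0 \<le> cinner x x" by (rule cinner_ge_zero)
  then have "Im (cinner x x) = 0" "0 \<le> Re (cinner x x)" by (auto simp: less_eq_complex_def)
  then show ?thesis by (simp add: norm_eq_sqrt_cinner complex_eq_iff)
qed

lemma norm_sq_Re: "(norm (x::'a::complex_inner))\<^sup>2 = Re (cinner x x)"
  by (simp add: cinner_self)

lemma norm_scaleC: "norm (c *\<^sub>C (x::'a::complex_inner)) = cmod c * norm x"
proof -
  have "(norm (c *\<^sub>C x))\<^sup>2 = (cmod c * norm x)\<^sup>2"
  proof -
    have "(norm (c *\<^sub>C x))\<^sup>2 = Re (cinner (c *\<^sub>C x) (c *\<^sub>C x))" by (rule norm_sq_Re)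
    also have "\<dots> = Re (cnj c * c * complex_of_real ((norm x)\<^sup>2))"
      by (simp add: cinner_scaleC_left cinner_scaleC_right cinner_self[of x] mult.assoc)
    also have "cnj c * c = complex_of_real ((cmod c)\<^sup>2)"
      by (simp add: complex_norm_square mult.commute del: of_real_power)
    also have "Re (complex_of_real ((cmod c)\<^sup>2) * complex_of_real ((norm x)\<^sup>2)) = (cmod c * norm x)\<^sup>2"
      by (simp only: of_real_mult[symmetric] Re_complex_of_real power_mult_distrib)
    finally show ?thesis .
  qed
  then show ?thesis by (simp add: power2_eq_iff_nonneg)
qed

lemma cinner_expand: "cinner (x + c *\<^sub>C y) (x + c *\<^sub>C y) =
   cinner x x + c * cinner x y + cnj c * cinner y x + (cnj c * c) * cinner y (y::'a::complex_inner)"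
  by (simp add: cinner_add_left cinner_add_right cinner_scaleC_left cinner_scaleC_right algebra_simps)

lemma cauchy_schwarz: "cmod (cinner x y) \<le> norm x * norm (y::'a::complex_inner)"
proof (cases "x = 0")
  case True then show ?thesis by simp
next
  case False
  define N where "N = (norm x)\<^sup>2"
  have N: "N > 0" using False by (simp add: N_def)
  define w where "w = cinner x y"
  define t where "t = - w / complex_of_real N"
  have wc: "w * cnj w = complex_of_real ((cmod w)\<^sup>2)"
    by (simp add: complex_norm_square del: of_real_power)
  have "0 \<le> Re (cinner (y + t *\<^sub>C x) (y + t *\<^sub>C x))"
    by (simp add: norm_sq_Re[symmetric])
  also have "cinner (y + t *\<^sub>C x) (y + t *\<^sub>C x) =
      complex_of_real ((norm y)\<^sup>2) + t * cnj w + cnj t * w + cnj t * t * complex_of_real N"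
    unfolding cinner_expand w_def N_def
    by (simp add: cinner_self cinner_commute[of y x])
  also have "\<dots> = complex_of_real ((norm y)\<^sup>2) - (w * cnj w) / complex_of_real N"
    using N by (simp add: t_def field_simps)
  also have "\<dots> = complex_of_real ((norm y)\<^sup>2 - (cmod w)\<^sup>2 / N)"
    by (simp only: wc of_real_diff of_real_divide)
  finally have "(cmod w)\<^sup>2 \<le> N * (norm y)\<^sup>2" using N by (simp add: field_simps)
  then have "(cmod w)\<^sup>2 \<le> (norm x * norm y)\<^sup>2" by (simp add: N_def power_mult_distrib)
  then show ?thesis unfolding w_def
    by (meson mult_nonneg_nonneg norm_ge_zero power2_le_imp_le)
qed


lemma bcl_add: "bounded_clinear f \<Longrightarrow> f (x + y) = f x + f y"
  by (simp add: bounded_clinear_def)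
lemma bcl_scale: "bounded_clinear f \<Longrightarrow> f (c *\<^sub>C x) = c *\<^sub>C f x"
  by (simp add: bounded_clinear_def)
lemma bcl_additive: "bounded_clinear f \<Longrightarrow> Modules.additive f"
  by (simp add: bounded_clinear_def Modules.additive_def)
lemma bcl_zero: "bounded_clinear f \<Longrightarrow> f 0 = 0"
  using Modules.additive.zero bcl_additive by blast
lemma bcl_diff: "bounded_clinear f \<Longrightarrow> f (x - y) = f x - f y"
  using Modules.additive.diff bcl_additive by blast
lemma bcl_minus: "bounded_clinear f \<Longrightarrow> f (- x) = - f x"
  using Modules.additive.minus bcl_additive by blast
lemma bcl_sum: "bounded_clinear f \<Longrightarrow> f (sum g A) = (\<Sum>x\<in>A. f (g x))"
  using Modules.additive.sum bcl_additive by blast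

lemma bcl_tendsto:
  assumes f: "bounded_clinear f" and X: "(X \<longlongrightarrow> x) F"
  shows "((\<lambda>k. f (X k)) \<longlongrightarrow> f x) F"
proof -
  obtain K where K: "\<And>x. norm (f x) \<le> norm x * K" using f by (auto simp: bounded_clinear_def)
  have "((\<lambda>k. X k - x) \<longlongrightarrow> 0) F" using X by (simp add: LIM_zero)
  then have lim: "((\<lambda>k. norm (X k - x) * K) \<longlongrightarrow> 0) F"
    by (intro tendsto_mult_left_zero tendsto_norm_zero)
  have ev: "\<forall>\<^sub>F k in F. norm (f (X k) - f x) \<le> norm (X k - x) * K"
    using K[of "X _ - x"] unfolding bcl_diff[OF f] by simp
  have "((\<lambda>k. f (X k) - f x) \<longlongrightarrow> 0) F"
    by (rule Lim_null_comparison[OF ev lim])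
  then show ?thesis by (simp add: LIM_zero_iff)
qed

lemma cinner_tendsto_right:
  assumes X: "(X \<longlongrightarrow> x) F"
  shows "((\<lambda>k. cinner y (X k)) \<longlongrightarrow> cinner y (x::'a::complex_inner)) F"
proof -
  have "((\<lambda>k. X k - x) \<longlongrightarrow> 0) F" using X by (simp add: LIM_zero)
  then have lim: "((\<lambda>k. norm y * norm (X k - x)) \<longlongrightarrow> 0) F"
    by (intro tendsto_mult_right_zero tendsto_norm_zero)
  have ev: "\<forall>\<^sub>F k in F. norm (cinner y (X k) - cinner y x) \<le> norm y * norm (X k - x)"
    using cauchy_schwarz[of y "X _ - x"] unfolding cinner_diff_right by simp
  have "((\<lambda>k. cinner y (X k) - cinner y x) \<longlongrightarrow> 0) F"
    by (rule Lim_null_comparison[OF ev lim])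
  then show ?thesis by (simp add: LIM_zero_iff)
qed

lemma cinner_tendsto_left:
  assumes X: "(X \<longlongrightarrow> x) F"
  shows "((\<lambda>k. cinner (X k) y) \<longlongrightarrow> cinner (x::'a::complex_inner) y) F"
proof -
  have "((\<lambda>k. cnj (cinner y (X k))) \<longlongrightarrow> cnj (cinner y x)) F"
    by (intro tendsto_cnj cinner_tendsto_right[OF X])
  then show ?thesis by (simp flip: cinner_commute)
qed

lemma parallelogram: "(norm (x + y))\<^sup>2 + (norm (x - y))\<^sup>2 = 2 * (norm x)\<^sup>2 + 2 * (norm (y::'a::complex_inner))\<^sup>2"
proof -
  have "cinner (x+y) (x+y) + cinner (x-y) (x-y) = 2 * cinner x x + 2 * cinner y y"
    unfolding cinner_add_left cinner_add_right cinner_diff_left cinner_diff_right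
    by (simp add: algebra_simps)
  then have "Re (cinner (x+y) (x+y)) + Re (cinner (x-y) (x-y)) = 2 * Re (cinner x x) + 2 * Re (cinner y y)"
    by (metis plus_complex.sel(1) Re_complex_of_real mult_2 )
  then show ?thesis by (simp only: norm_sq_Re)
qed


lemma norm_sq_expand_Re:
  "(norm (x + c *\<^sub>C y))\<^sup>2 = Re (complex_of_real ((norm x)\<^sup>2) + c * cinner x y + cnj c * cinner y x
      + cnj c * c * complex_of_real ((norm (y::'a::complex_inner))\<^sup>2))"
  by (simp only: norm_sq_Re[of "x + c *\<^sub>C y"] cinner_expand cinner_self[of x] cinner_self[of y])

lemma riesz:
  fixes f :: "'a::chilbert_space \<Rightarrow> complex"
  assumes add: "\<And>x y. f (x + y) = f x + f y"
    and sc: "\<And>c x. f (c *\<^sub>C x) = c * f x"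
    and cont: "\<And>X x. X \<longlonglongrightarrow> x \<Longrightarrow> (\<lambda>k. f (X k)) \<longlonglongrightarrow> f x"
  shows "\<exists>s. \<forall>x. f x = cinner s x"
proof (cases "\<forall>x. f x = 0")
  case True then show ?thesis by (intro exI[of _ 0]) simp
next
  case False
  then obtain x0 where x0: "f x0 \<noteq> 0" by blast
  define M where "M = {x. f x = 1}"
  have f0: "f 0 = 0" using add[of 0 0] by simp
  have x1M: "(1 / f x0) *\<^sub>C x0 \<in> M" using x0 by (simp add: M_def sc)
  define d where "d = Inf (norm ` M)"
  have bdd: "bdd_below (norm ` M)" by (rule bdd_belowI[of _ 0]) auto
  have dle: "d \<le> norm w" if "w \<in> M" for w
    unfolding d_def using bdd that by (simp add: cInf_lower)
  have d0: "0 \<le> d" unfolding d_def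
    by (rule cInf_greatest) (use x1M in auto)
  define \<delta> where "\<delta> k = inverse (real (Suc k))" for k
  have \<delta>pos: "\<delta> k > 0" for k by (simp add: \<delta>_def)
  have "\<exists>x\<in>M. (norm x)\<^sup>2 < d\<^sup>2 + \<delta> k" for k
  proof -
    have "d < sqrt (d\<^sup>2 + \<delta> k)" using \<delta>pos[of k]
      by (intro real_less_rsqrt) simp
    then have "Inf (norm ` M) < sqrt (d\<^sup>2 + \<delta> k)" by (simp add: d_def)
    then obtain x where x: "x \<in> M" "norm x < sqrt (d\<^sup>2 + \<delta> k)"
      using cInf_less_iff[OF _ bdd] x1M by blast
    have nn: "0 \<le> d\<^sup>2 + \<delta> k" using \<delta>pos[of k] by (simp add: add_nonneg_pos less_imp_le)
    have "(norm x)\<^sup>2 < (sqrt (d\<^sup>2 + \<delta> k))\<^sup>2"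
      using x(2) by (intro power_strict_mono) auto
    then have "(norm x)\<^sup>2 < d\<^sup>2 + \<delta> k" using nn by simp
    then show ?thesis using x(1) by blast
  qed
  then obtain X where XM: "\<And>k. X k \<in> M" and Xn: "\<And>k. (norm (X k))\<^sup>2 < d\<^sup>2 + \<delta> k"
    by metis
  have mid: "4 * d\<^sup>2 \<le> (norm (x + y))\<^sup>2" if "x \<in> M" "y \<in> M" for x y
  proof -
    have "(1/2 :: complex) *\<^sub>C (x + y) \<in> M" using that by (simp add: M_def sc add)
    then have "d \<le> norm ((1/2 :: complex) *\<^sub>C (x + y))" by (rule dle)
    then have "2 * d \<le> norm (x + y)" by (simp add: norm_scaleC)
    then have "(2 * d)\<^sup>2 \<le> (norm (x + y))\<^sup>2" using d0 by (intro power_mono) auto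
    then show ?thesis by (simp add: power_mult_distrib)
  qed
  have dist_sq: "(norm (X k - X l))\<^sup>2 \<le> 2 * \<delta> k + 2 * \<delta> l" for k l
    using parallelogram[of "X k" "X l"] mid[OF XM XM, of k l] Xn[of k] Xn[of l] by linarith
  have "Cauchy X"
  proof (rule metric_CauchyI)
    fix e :: real assume e: "0 < e"
    obtain N where N: "inverse (real (Suc N)) < e\<^sup>2 / 4"
      using e by (metis reals_Archimedean zero_less_divide_iff zero_less_numeral zero_less_power)
    have "dist (X k) (X l) < e" if "k \<ge> N" "l \<ge> N" for k l
    proof -
      have "\<delta> k \<le> inverse (real (Suc N))" "\<delta> l \<le> inverse (real (Suc N))"
        using that by (auto simp: \<delta>_def intro!: le_imp_inverse_le)
      then have "(norm (X k - X l))\<^sup>2 < e\<^sup>2" using dist_sq[of k l] N by linarith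
      then show ?thesis using e by (simp add: dist_norm power_less_imp_less_base less_imp_le)
    qed
    then show "\<exists>M. \<forall>m\<ge>M. \<forall>n\<ge>M. dist (X m) (X n) < e" by blast
  qed
  then obtain z where Xz: "X \<longlonglongrightarrow> z" using Cauchy_convergent_iff convergent_def by blast
  have fz: "f z = 1"
  proof -
    have "(\<lambda>k. f (X k)) \<longlonglongrightarrow> f z" by (rule cont[OF Xz])
    moreover have "(\<lambda>k. f (X k)) = (\<lambda>k. 1)" using XM by (simp add: M_def)
    ultimately show ?thesis by (simp add: LIMSEQ_const_iff)
  qed
  have zmin: "(norm z)\<^sup>2 \<le> (norm w)\<^sup>2" if "w \<in> M" for w
  proof -
    have "(\<lambda>k. (norm (X k))\<^sup>2) \<longlonglongrightarrow> (norm z)\<^sup>2" by (intro tendsto_intros Xz)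
    moreover have "(\<lambda>k. (norm w)\<^sup>2 + \<delta> k) \<longlonglongrightarrow> (norm w)\<^sup>2"
      unfolding \<delta>_def by (rule LIMSEQ_inverse_real_of_nat_add)
    moreover have "(norm (X k))\<^sup>2 \<le> (norm w)\<^sup>2 + \<delta> k" for k
    proof -
      have "d\<^sup>2 \<le> (norm w)\<^sup>2" using dle[OF that] d0 by (simp add: power_mono)
      then show ?thesis using Xn[of k] by linarith
    qed
    ultimately show ?thesis by (meson LIMSEQ_le)
  qed
  have orth: "cinner z v = 0" if "f v = 0" for v
  proof (cases "v = 0")
    case True then show ?thesis by simp
  next
    case False
    define N where "N = (norm v)\<^sup>2"
    have N: "N > 0" using False by (simp add: N_def)
    define w where "w = cinner z v"
    define t where "t = - cnj w / complex_of_real N"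
    have "z + t *\<^sub>C v \<in> M" using fz that by (simp add: M_def add sc)
    then have "(norm z)\<^sup>2 \<le> (norm (z + t *\<^sub>C v))\<^sup>2" by (rule zmin)
    also have "\<dots> = Re (complex_of_real ((norm z)\<^sup>2) + t * w + cnj t * cnj w + cnj t * t * complex_of_real N)"
      unfolding norm_sq_expand_Re w_def N_def by (simp add: cinner_commute[of v z])
    also have "complex_of_real ((norm z)\<^sup>2) + t * w + cnj t * cnj w + cnj t * t * complex_of_real N
        = complex_of_real ((norm z)\<^sup>2) - w * cnj w / complex_of_real N"
      using N by (simp add: t_def field_simps)
    also have "w * cnj w = complex_of_real ((cmod w)\<^sup>2)"
      by (simp add: complex_norm_square del: of_real_power)
    also have "complex_of_real ((norm z)\<^sup>2) - complex_of_real ((cmod w)\<^sup>2) / complex_of_real N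
        = complex_of_real ((norm z)\<^sup>2 - (cmod w)\<^sup>2 / N)"
      by (simp only: of_real_divide of_real_diff)
    finally have "(cmod w)\<^sup>2 / N \<le> 0"
      by (simp only: Re_complex_of_real)
    then have "(cmod w)\<^sup>2 \<le> 0" using N by (simp add: divide_le_0_iff)
    then show ?thesis unfolding w_def by simp
  qed
  have z0: "z \<noteq> 0" using fz f0 by auto
  define s where "s = complex_of_real (inverse ((norm z)\<^sup>2)) *\<^sub>C z"
  have "f x = cinner s x" for x
  proof -
    have "f (x - f x *\<^sub>C z) = 0"
      using add[of "x - f x *\<^sub>C z" "f x *\<^sub>C z"] by (simp add: sc fz)
    then have "cinner z (x - f x *\<^sub>C z) = 0" by (rule orth)
    then have "cinner z x = f x * complex_of_real ((norm z)\<^sup>2)"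
      by (simp add: cinner_diff_right cinner_scaleC_right cinner_self)
    then show ?thesis using z0 by (simp add: s_def cinner_scaleC_left del: of_real_power)
  qed
  then show ?thesis by blast
qed

lemma cadjoint_prop:
  fixes T :: "'a::chilbert_space \<Rightarrow> 'b::complex_inner"
  assumes T: "bounded_clinear T"
  shows "cinner (cadjoint T y) x = cinner y (T x)"
proof -
  have "\<exists>s. \<forall>x. cinner y (T x) = cinner s x" for y
  proof (rule riesz)
    show "cinner y (T (a + b)) = cinner y (T a) + cinner y (T b)" for a b
      by (simp add: bcl_add[OF T] cinner_add_right)
    show "cinner y (T (c *\<^sub>C a)) = c * cinner y (T a)" for c a
      by (simp add: bcl_scale[OF T] cinner_scaleC_right)
    show "(\<lambda>k. cinner y (T (X k))) \<longlonglongrightarrow> cinner y (T x)" if "X \<longlonglongrightarrow> x" for X x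
      by (intro cinner_tendsto_right bcl_tendsto[OF T] that)
  qed
  then obtain S where "\<And>y x. cinner y (T x) = cinner (S y) x" by metis
  then have ex: "\<exists>S. \<forall>x y. cinner (S y) x = cinner y (T x)" by metis
  show ?thesis unfolding cadjoint_def using someI_ex[OF ex] by blast
qed

lemma cadjoint_prop':
  fixes T :: "'a::chilbert_space \<Rightarrow> 'b::complex_inner"
  assumes T: "bounded_clinear T"
  shows "cinner x (cadjoint T y) = cinner (T x) y"
  by (metis T cadjoint_prop cinner_commute)


lemma scaleC_minus_one: "(-1) *\<^sub>C (x::'a::complex_vector) = - x"
  by (simp add: cvs.scale_minus_left scaleC_one)

lemma bcl_scaleC: "bounded_clinear (\<lambda>x::'a::complex_inner. c *\<^sub>C x)"
  unfolding bounded_clinear_def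
  by (auto simp: scaleC_add_right scaleC_scaleC mult.commute norm_scaleC intro!: exI[of _ "cmod c"])

lemma invol_zero: "invol (0::'a::star_algebra) = 0"
  using invol_add[of "0::'a" 0] by simp

definition repr :: "nat \<Rightarrow> ('a \<Rightarrow> 'k \<Rightarrow> 'k) \<Rightarrow> (nat \<Rightarrow> 'h \<Rightarrow> 'k) \<Rightarrow> nat \<Rightarrow> (nat \<times> nat \<Rightarrow> 'a) \<Rightarrow> (nat \<times> nat \<Rightarrow> 'h) \<Rightarrow> 'k::ab_group_add"
  where "repr n \<Phi> V m a \<xi> = (\<Sum>p\<in>{1..m}\<times>{1..n}. \<Phi> (a p) (V (snd p) (\<xi> p)))"

definition cat :: "nat \<Rightarrow> (nat \<times> nat \<Rightarrow> 'b) \<Rightarrow> (nat \<times> nat \<Rightarrow> 'b) \<Rightarrow> nat \<times> nat \<Rightarrow> 'b"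
  where "cat m f g p = (if fst p \<le> m then f p else g (fst p - m, snd p))"

lemma repr_zero: "repr n \<Phi> V 0 a \<xi> = 0"
  by (simp add: repr_def)

lemma repr_add: "repr n \<Phi> V m a \<xi> + repr n \<Phi> V m' a' \<xi>' = repr n \<Phi> V (m + m') (cat m a a') (cat m \<xi> \<xi>')"
proof -
  let ?F = "\<lambda>a \<xi> p. \<Phi> (a p) (V (snd p) (\<xi> p))"
  have split: "{1..m + m'} \<times> {1..n} = {1..m} \<times> {1..n} \<union> {m+1..m+m'} \<times> {1..n}" by auto
  have "repr n \<Phi> V (m + m') (cat m a a') (cat m \<xi> \<xi>') =
      (\<Sum>p\<in>{1..m} \<times> {1..n}. ?F (cat m a a') (cat m \<xi> \<xi>') p) +
      (\<Sum>p\<in>{m+1..m+m'} \<times> {1..n}. ?F (cat m a a') (cat m \<xi> \<xi>') p)"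
    unfolding repr_def split by (rule sum.union_disjoint) auto
  also have "(\<Sum>p\<in>{1..m} \<times> {1..n}. ?F (cat m a a') (cat m \<xi> \<xi>') p) = repr n \<Phi> V m a \<xi>"
    unfolding repr_def by (rule sum.cong) (auto simp: cat_def)
  also have "(\<Sum>p\<in>{m+1..m+m'} \<times> {1..n}. ?F (cat m a a') (cat m \<xi> \<xi>') p) = repr n \<Phi> V m' a' \<xi>'"
    unfolding repr_def
    by (rule sum.reindex_bij_witness[of _ "\<lambda>p. (fst p + m, snd p)" "\<lambda>p. (fst p - m, snd p)"])
       (auto simp: cat_def)
  finally show ?thesis by simp
qed

lemma st_Phi_bcl: "stinespring_rep n \<rho> \<Phi> V \<Longrightarrow> bounded_clinear (\<Phi> a)"
  unfolding stinespring_rep_def representation_def cont_lin_map_def by blast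
lemma st_V_bcl: "stinespring_rep n \<rho> \<Phi> V \<Longrightarrow> i \<in> {1..n} \<Longrightarrow> bounded_clinear (V i)"
  unfolding stinespring_rep_def by blast
lemma st_mult: "stinespring_rep n \<rho> \<Phi> V \<Longrightarrow> \<Phi> (a * b) x = \<Phi> a (\<Phi> b x)"
  unfolding stinespring_rep_def representation_def by simp
lemma st_invol: "stinespring_rep n \<rho> \<Phi> V \<Longrightarrow> \<Phi> (invol a) = cadjoint (\<Phi> a)"
  unfolding stinespring_rep_def representation_def by simp
lemma st_rho: "stinespring_rep n \<rho> \<Phi> V \<Longrightarrow> i \<in> {1..n} \<Longrightarrow> j \<in> {1..n} \<Longrightarrow>
    \<rho> i j a x = cadjoint (V i) (\<Phi> a (V j x))"
  unfolding stinespring_rep_def by simp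
lemma st_dense: "stinespring_rep n \<rho> \<Phi> V \<Longrightarrow>
    closure (cspan {\<Phi> a (V i \<xi>) | a i \<xi>. i \<in> {1..n}}) = UNIV"
  unfolding stinespring_rep_def by simp

lemma st_inner_Phi:
  assumes st: "stinespring_rep n \<rho> \<Phi> V"
  shows "cinner (\<Phi> a u) w = cinner u (\<Phi> (invol a) w)"
  using cadjoint_prop'[OF st_Phi_bcl[OF st], of u a w] st_invol[OF st] by simp

lemma st_inner:
  assumes st: "stinespring_rep n \<rho> \<Phi> V" and i: "i \<in> {1..n}" and j: "j \<in> {1..n}"
  shows "cinner (\<Phi> a (V i \<xi>)) (\<Phi> b (V j \<eta>)) = cinner \<xi> (\<rho> i j (invol a * b) \<eta>)"
proof -
  have "cinner (\<Phi> a (V i \<xi>)) (\<Phi> b (V j \<eta>)) = cinner (V i \<xi>) (\<Phi> (invol a * b) (V j \<eta>))"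
    by (simp add: st_inner_Phi[OF st] st_mult[OF st])
  also have "\<dots> = cinner \<xi> (\<rho> i j (invol a * b) \<eta>)"
    by (simp add: st_rho[OF st i j] cadjoint_prop'[OF st_V_bcl[OF st i]])
  finally show ?thesis .
qed

lemma repr_norm:
  assumes st: "stinespring_rep n \<rho> \<Phi> V"
  shows "(norm (repr n \<Phi> V m a \<xi>))\<^sup>2 = Re (\<Sum>p\<in>{1..m}\<times>{1..n}. \<Sum>q\<in>{1..m}\<times>{1..n}.
            cinner (\<xi> p) (\<rho> (snd p) (snd q) (invol (a p) * a q) (\<xi> q)))"
  unfolding norm_sq_Re repr_def cinner_sum_left
  unfolding cinner_sum_right
  by (intro arg_cong[where f=Re] sum.cong refl) (auto simp: st_inner[OF st])

lemma repr_scale: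
  assumes st: "stinespring_rep n \<rho> \<Phi> V"
  shows "c *\<^sub>C repr n \<Phi> V m a \<xi> = repr n \<Phi> V m a (\<lambda>p. c *\<^sub>C \<xi> p)"
  unfolding repr_def cvs.scale_sum_right
  by (rule sum.cong) (auto simp: bcl_scale[OF st_Phi_bcl[OF st]] bcl_scale[OF st_V_bcl[OF st]])

lemma repr_Phi:
  assumes st: "stinespring_rep n \<rho> \<Phi> V"
  shows "\<Phi> b (repr n \<Phi> V m a \<xi>) = repr n \<Phi> V m (\<lambda>p. b * a p) \<xi>"
  unfolding repr_def bcl_sum[OF st_Phi_bcl[OF st]] by (simp add: st_mult[OF st])

lemma repr_single:
  assumes st: "stinespring_rep n \<rho> \<Phi> V" and i: "i \<in> {1..n}"
  shows "\<Phi> a (V i \<xi>) = repr n \<Phi> V 1 (\<lambda>_. a) (\<lambda>p. if snd p = i then \<xi> else 0)"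
proof -
  have "repr n \<Phi> V 1 (\<lambda>_. a) (\<lambda>p. if snd p = i then \<xi> else 0) =
      (\<Sum>p\<in>{1..1}\<times>{1..n}. if p = (1::nat, i) then \<Phi> a (V i \<xi>) else 0)"
    unfolding repr_def
    by (rule sum.cong) (auto simp: bcl_zero[OF st_V_bcl[OF st]] bcl_zero[OF st_Phi_bcl[OF st]])
  moreover have "(\<Sum>p\<in>{1..1}\<times>{1..n}. if p = (1::nat, i) then \<Phi> a (V i \<xi>) else 0) = \<Phi> a (V i \<xi>)"
    using i by (simp add: sum.delta')
  ultimately show ?thesis by simp
qed

lemma cspan_sub:
  assumes st: "stinespring_rep n \<rho> \<Phi> V"
  shows "cspan {\<Phi> a (V i \<xi>) | a i \<xi>. i \<in> {1..n}} \<subseteq> {repr n \<Phi> V m b \<eta> | m b \<eta>. True}"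
    (is "cspan ?S \<subseteq> ?D")
proof -
  have addD: "x + y \<in> ?D" if "x \<in> ?D" "y \<in> ?D" for x y
    using that by (force simp: repr_add)
  have scD: "c *\<^sub>C x \<in> ?D" if "x \<in> ?D" for x c
    using that by (force simp: repr_scale[OF st])
  have SD: "x \<in> ?D" if "x \<in> ?S" for x
    using that repr_single[OF st] by blast
  have "(\<Sum>y\<in>F. c y *\<^sub>C y) \<in> ?D" if "finite F" "F \<subseteq> ?S" for F c
    using that
  proof (induction F rule: finite_induct)
    case empty
    then show ?case using repr_zero by (metis (mono_tags, lifting) mem_Collect_eq sum.empty)
  next
    case (insert y F)
    have y: "y \<in> ?S" and F: "F \<subseteq> ?S" using insert.prems by auto
    have "c y *\<^sub>C y + (\<Sum>y\<in>F. c y *\<^sub>C y) \<in> ?D" by (intro addD scD SD y insert.IH F)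
    then show ?case using insert.hyps by (simp only: sum.insert[OF insert.hyps])
  qed
  then show ?thesis unfolding cspan_def by blast
qed

lemma closure_D:
  assumes st: "stinespring_rep n \<rho> \<Phi> V"
  shows "closure {repr n \<Phi> V m b \<eta> | m b \<eta>. True} = UNIV"
  using closure_mono[OF cspan_sub[OF st]] st_dense[OF st] by blast

lemma orth_zero:
  assumes st: "stinespring_rep n \<rho> \<Phi> V" and z: "\<And>b. \<Phi> b z = 0"
  shows "z = 0"
proof -
  have orth: "cinner (repr n \<Phi> V m a \<xi>) z = 0" for m a \<xi>
    unfolding repr_def cinner_sum_left by (simp add: st_inner_Phi[OF st] z)
  have "z \<in> closure {repr n \<Phi> V m b \<eta> | m b \<eta>. True}" using closure_D[OF st] by simp
  then obtain Y where YD: "\<And>k. Y k \<in> {repr n \<Phi> V m b \<eta> | m b \<eta>. True}" and Yz: "Y \<longlonglongrightarrow> z"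
    unfolding closure_sequential by blast
  have o1: "cinner (Y k) z = 0" for k using YD[of k] orth by auto
  have o2: "cinner z (Y k) = 0" for k using o1[of k] by (metis cinner_commute complex_cnj_zero)
  have le: "(norm z)\<^sup>2 \<le> (norm (z - Y k))\<^sup>2" for k
  proof -
    have "(norm (z - Y k))\<^sup>2 = Re (cinner z z - cinner z (Y k) - cinner (Y k) z + cinner (Y k) (Y k))"
      unfolding norm_sq_Re by (simp add: cinner_diff_left cinner_diff_right)
    also have "\<dots> = (norm z)\<^sup>2 + (norm (Y k))\<^sup>2" by (simp add: o1 o2 norm_sq_Re)
    finally show ?thesis by simp
  qed
  have "(\<lambda>k. (norm (z - Y k))\<^sup>2) \<longlonglongrightarrow> (norm (z - z))\<^sup>2" by (intro tendsto_intros Yz)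
  then have "(\<lambda>k. (norm (z - Y k))\<^sup>2) \<longlonglongrightarrow> 0" by simp
  then have "(norm z)\<^sup>2 \<le> 0" using le by (meson LIMSEQ_le_const)
  then show ?thesis by simp
qed

lemma key_ineq:
  assumes str: "stinespring_rep n \<rho> \<Phi>\<rho> V\<rho>" and stt: "stinespring_rep n \<theta> \<Phi>\<theta> V\<theta>"
    and le: "cnp_le n \<theta> \<rho>" and n: "1 \<le> n"
  shows "norm (repr n \<Phi>\<theta> V\<theta> m a \<xi>) \<le> norm (repr n \<Phi>\<rho> V\<rho> m a \<xi>)"
proof (cases "m = 0")
  case True then show ?thesis by (simp add: repr_zero)
next
  case False
  let ?P = "{1..m}\<times>{1..n}"
  define b where "b r p = (if r = (1::nat, 1::nat) then a p else 0)" for r p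
  have bsum: "(\<Sum>r\<in>?P. invol (b r p) * b r q) = invol (a p) * a q" for p q
  proof -
    have "(\<Sum>r\<in>?P. invol (b r p) * b r q) = (\<Sum>r\<in>?P. if r = (1, 1) then invol (a p) * a q else 0)"
      by (rule sum.cong) (auto simp: b_def invol_zero)
    also have "\<dots> = invol (a p) * a q" using False n by (simp add: sum.delta')
    finally show ?thesis .
  qed
  have "0 \<le> (\<Sum>p\<in>?P. \<Sum>q\<in>?P. cinner (\<xi> p)
      (\<rho> (snd p) (snd q) (invol (a p) * a q) (\<xi> q) - \<theta> (snd p) (snd q) (invol (a p) * a q) (\<xi> q)))"
  proof -
    have "0 \<le> (\<Sum>p\<in>?P. \<Sum>q\<in>?P. cinner (\<xi> p)
      (\<rho> (snd p) (snd q) (\<Sum>r\<in>?P. invol (b r p) * b r q) (\<xi> q) - \<theta> (snd p) (snd q) (\<Sum>r\<in>?P. invol (b r p) * b r q) (\<xi> q)))"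
      using le unfolding cnp_le_def completely_n_positive_def
      apply -
      apply (drule conjunct2)
      apply (drule spec[of _ m])
      apply (drule spec[of _ b])
      apply (drule spec[of _ \<xi>])
      apply assumption
      done
    then show ?thesis by (simp only: bsum)
  qed
  also have "\<dots> = (\<Sum>p\<in>?P. \<Sum>q\<in>?P. cinner (\<xi> p) (\<rho> (snd p) (snd q) (invol (a p) * a q) (\<xi> q)))
      - (\<Sum>p\<in>?P. \<Sum>q\<in>?P. cinner (\<xi> p) (\<theta> (snd p) (snd q) (invol (a p) * a q) (\<xi> q)))"
    by (simp add: cinner_diff_right sum_subtractf)
  finally have "0 \<le> Re ((\<Sum>p\<in>?P. \<Sum>q\<in>?P. cinner (\<xi> p) (\<rho> (snd p) (snd q) (invol (a p) * a q) (\<xi> q)))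
      - (\<Sum>p\<in>?P. \<Sum>q\<in>?P. cinner (\<xi> p) (\<theta> (snd p) (snd q) (invol (a p) * a q) (\<xi> q))))"
    by (simp only: less_eq_complex_def zero_complex.sel)
  then have "(norm (repr n \<Phi>\<theta> V\<theta> m a \<xi>))\<^sup>2 \<le> (norm (repr n \<Phi>\<rho> V\<rho> m a \<xi>))\<^sup>2"
    unfolding repr_norm[OF str] repr_norm[OF stt] minus_complex.sel by linarith
  then show ?thesis by (rule power2_le_imp_le) simp
qed


lemma repr_neg:
  assumes st: "stinespring_rep n \<rho> \<Phi> V"
  shows "- repr n \<Phi> V m a \<xi> = repr n \<Phi> V m a (\<lambda>p. - \<xi> p)"
  using repr_scale[OF st, of "-1"] by (simp add: scaleC_minus_one)

theorem lemma3p4: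
  fixes n :: nat
    and \<rho> \<theta> :: "nat \<Rightarrow> nat \<Rightarrow> 'a::{star_algebra,t2_space} \<Rightarrow> 'h::chilbert_space \<Rightarrow> 'h"
    and \<Phi>\<rho> :: "'a \<Rightarrow> 'r::chilbert_space \<Rightarrow> 'r" and V\<rho> :: "nat \<Rightarrow> 'h \<Rightarrow> 'r"
    and \<Phi>\<theta> :: "'a \<Rightarrow> 't::chilbert_space \<Rightarrow> 't" and V\<theta> :: "nat \<Rightarrow> 'h \<Rightarrow> 't"
  assumes "pro_cstar_algebra TYPE('a)"
    and "1 \<le> n"
    and "completely_n_positive n \<rho>"
    and "completely_n_positive n \<theta>"
    and "stinespring_rep n \<rho> \<Phi>\<rho> V\<rho>"
    and "stinespring_rep n \<theta> \<Phi>\<theta> V\<theta>"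
    and "cnp_le n \<theta> \<rho>"
  shows "\<exists>W :: 'r \<Rightarrow> 't. bounded_clinear W \<and> onorm W \<le> 1 \<and>
           (\<forall>i\<in>{1..n}. W \<circ> V\<rho> i = V\<theta> i) \<and>
           (\<forall>a. W \<circ> \<Phi>\<rho> a = \<Phi>\<theta> a \<circ> W)"
proof -
  note n = assms(2) and str = assms(5) and stt = assms(6) and le = assms(7)
  define R where "R = repr n \<Phi>\<rho> V\<rho>"
  define T where "T = repr n \<Phi>\<theta> V\<theta>"
  define D where "D = {R m b \<eta> | m b \<eta>. True}"
  have key: "norm (T m a \<xi>) \<le> norm (R m a \<xi>)" for m a \<xi>
    unfolding R_def T_def by (rule key_ineq[OF str stt le n])
  have wd: "T m a \<xi> = T m' a' \<xi>'" if "R m a \<xi> = R m' a' \<xi>'" for m a \<xi> m' a' \<xi>'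
  proof -
    have "T m a \<xi> - T m' a' \<xi>' = T (m + m') (cat m a a') (cat m \<xi> (\<lambda>p. - \<xi>' p))"
      unfolding T_def by (simp add: repr_add[symmetric] repr_neg[OF stt, symmetric])
    moreover have "R m a \<xi> - R m' a' \<xi>' = R (m + m') (cat m a a') (cat m \<xi> (\<lambda>p. - \<xi>' p))"
      unfolding R_def by (simp add: repr_add[symmetric] repr_neg[OF str, symmetric])
    ultimately have "norm (T m a \<xi> - T m' a' \<xi>') \<le> norm (R m a \<xi> - R m' a' \<xi>')"
      using key by simp
    then show ?thesis using that by simp
  qed
  define W0 where "W0 x = (SOME y. \<exists>m a \<xi>. x = R m a \<xi> \<and> y = T m a \<xi>)" for x
  have W0R: "W0 (R m a \<xi>) = T m a \<xi>" for m a \<xi>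
  proof -
    have "\<exists>m' a' \<xi>'. R m a \<xi> = R m' a' \<xi>' \<and> W0 (R m a \<xi>) = T m' a' \<xi>'"
      unfolding W0_def by (rule someI_ex) blast
    then show ?thesis using wd by metis
  qed
  have Dadd: "x + y \<in> D" if "x \<in> D" "y \<in> D" for x y
    using that unfolding D_def R_def by (force simp: repr_add)
  have Dsc: "c *\<^sub>C x \<in> D" if "x \<in> D" for x c
    using that unfolding D_def R_def by (force simp: repr_scale[OF str])
  have DPhi: "\<Phi>\<rho> b x \<in> D" if "x \<in> D" for x b
    using that unfolding D_def R_def by (force simp: repr_Phi[OF str])
  have Radd: "R m a \<xi> + R m' a' \<xi>' = R (m + m') (cat m a a') (cat m \<xi> \<xi>')" for m a \<xi> m' a' \<xi>'
    unfolding R_def by (rule repr_add)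
  have Tadd: "T m a \<xi> + T m' a' \<xi>' = T (m + m') (cat m a a') (cat m \<xi> \<xi>')" for m a \<xi> m' a' \<xi>'
    unfolding T_def by (rule repr_add)
  have Rsc: "c *\<^sub>C R m a \<xi> = R m a (\<lambda>p. c *\<^sub>C \<xi> p)" for c m a \<xi>
    unfolding R_def by (rule repr_scale[OF str])
  have Tsc: "c *\<^sub>C T m a \<xi> = T m a (\<lambda>p. c *\<^sub>C \<xi> p)" for c m a \<xi>
    unfolding T_def by (rule repr_scale[OF stt])
  have RPhi: "\<Phi>\<rho> b (R m a \<xi>) = R m (\<lambda>p. b * a p) \<xi>" for b m a \<xi>
    unfolding R_def by (rule repr_Phi[OF str])
  have TPhi: "\<Phi>\<theta> b (T m a \<xi>) = T m (\<lambda>p. b * a p) \<xi>" for b m a \<xi>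
    unfolding T_def by (rule repr_Phi[OF stt])
  have W0add: "W0 (x + y) = W0 x + W0 y" if "x \<in> D" "y \<in> D" for x y
    using that unfolding D_def by (auto simp: W0R Radd Tadd)
  have W0sc: "W0 (c *\<^sub>C x) = c *\<^sub>C W0 x" if "x \<in> D" for x c
    using that unfolding D_def by (auto simp: W0R Rsc Tsc)
  have W0Phi: "W0 (\<Phi>\<rho> b x) = \<Phi>\<theta> b (W0 x)" if "x \<in> D" for x b
    using that unfolding D_def by (auto simp: W0R RPhi TPhi)
  have W0norm: "norm (W0 x) \<le> norm x" if "x \<in> D" for x
    using that unfolding D_def by (auto simp: W0R key)
  have W0diff: "W0 (x - y) = W0 x - W0 y" and Ddiff: "x - y \<in> D" if "x \<in> D" "y \<in> D" for x y
  proof -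
    have e: "x - y = x + (-1) *\<^sub>C y" by (simp add: scaleC_minus_one)
    show "x - y \<in> D" unfolding e using that by (intro Dadd Dsc)
    have "W0 (x + (-1) *\<^sub>C y) = W0 x + (-1) *\<^sub>C W0 y"
      using that by (simp only: W0add Dsc W0sc)
    then show "W0 (x - y) = W0 x - W0 y" by (simp add: scaleC_minus_one)
  qed
  have uc: "uniformly_continuous_on D W0"
    unfolding uniformly_continuous_on_def
  proof (intro allI impI)
    fix e :: real assume e: "0 < e"
    show "\<exists>d>0. \<forall>x\<in>D. \<forall>x'\<in>D. dist x' x < d \<longrightarrow> dist (W0 x') (W0 x) < e"
    proof (intro exI[of _ e] conjI ballI impI)
      fix x x' assume x: "x \<in> D" and x': "x' \<in> D" and d: "dist x' x < e"
      have "norm (W0 x' - W0 x) = norm (W0 (x' - x))" using x x' by (simp add: W0diff)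
      also have "\<dots> \<le> norm (x' - x)" using x x' by (intro W0norm Ddiff)
      finally show "dist (W0 x') (W0 x) < e" using d by (simp add: dist_norm)
    qed (rule e)
  qed
  have clD: "closure D = UNIV" unfolding D_def R_def by (rule closure_D[OF str])
  obtain g where guc: "uniformly_continuous_on (closure D) g" and gW0: "\<And>x. x \<in> D \<Longrightarrow> W0 x = g x"
    using uniformly_continuous_on_extension_on_closure[OF uc] by metis
  have gcont: "continuous_on UNIV g" using guc clD uniformly_continuous_imp_continuous by metis
  have gseq: "(\<lambda>k. g (X k)) \<longlonglongrightarrow> g x" if "X \<longlonglongrightarrow> x" for X x
    using gcont that by (metis UNIV_I continuous_on_def continuous_on_tendsto_compose eventually_sequentially)
  have approx: "\<exists>X. (\<forall>k. X k \<in> D) \<and> X \<longlonglongrightarrow> x" for x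
    using clD closure_sequential by (metis UNIV_I)
  have gadd: "g (x + y) = g x + g y" for x y
  proof -
    obtain X where XD: "\<And>k. X k \<in> D" and Xx: "X \<longlonglongrightarrow> x" using approx by blast
    obtain Y where YD: "\<And>k. Y k \<in> D" and Yy: "Y \<longlonglongrightarrow> y" using approx by blast
    have "(\<lambda>k. g (X k + Y k)) \<longlonglongrightarrow> g (x + y)" by (intro gseq tendsto_add Xx Yy)
    moreover have "(\<lambda>k. g (X k + Y k)) = (\<lambda>k. g (X k) + g (Y k))"
      using XD YD by (simp add: Dadd W0add flip: gW0)
    moreover have "(\<lambda>k. g (X k) + g (Y k)) \<longlonglongrightarrow> g x + g y" by (intro tendsto_add gseq Xx Yy)
    ultimately show ?thesis using LIMSEQ_unique by metis
  qed
  have gsc: "g (c *\<^sub>C x) = c *\<^sub>C g x" for c x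
  proof -
    obtain X where XD: "\<And>k. X k \<in> D" and Xx: "X \<longlonglongrightarrow> x" using approx by blast
    have "(\<lambda>k. g (c *\<^sub>C X k)) \<longlonglongrightarrow> g (c *\<^sub>C x)" by (intro gseq bcl_tendsto[OF bcl_scaleC] Xx)
    moreover have "(\<lambda>k. g (c *\<^sub>C X k)) = (\<lambda>k. c *\<^sub>C g (X k))"
      using XD by (simp add: Dsc W0sc flip: gW0)
    moreover have "(\<lambda>k. c *\<^sub>C g (X k)) \<longlonglongrightarrow> c *\<^sub>C g x"
      by (intro bcl_tendsto[OF bcl_scaleC] gseq Xx)
    ultimately show ?thesis using LIMSEQ_unique by metis
  qed
  have gnorm: "norm (g x) \<le> norm x" for x
  proof -
    obtain X where XD: "\<And>k. X k \<in> D" and Xx: "X \<longlonglongrightarrow> x" using approx by blast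
    have "(\<lambda>k. norm (g (X k))) \<longlonglongrightarrow> norm (g x)" by (intro tendsto_norm gseq Xx)
    moreover have "(\<lambda>k. norm (X k)) \<longlonglongrightarrow> norm x" by (intro tendsto_norm Xx)
    moreover have "norm (g (X k)) \<le> norm (X k)" for k using XD W0norm gW0 by metis
    ultimately show ?thesis by (meson LIMSEQ_le)
  qed
  have gPhi: "g (\<Phi>\<rho> b x) = \<Phi>\<theta> b (g x)" for b x
  proof -
    obtain X where XD: "\<And>k. X k \<in> D" and Xx: "X \<longlonglongrightarrow> x" using approx by blast
    have "(\<lambda>k. g (\<Phi>\<rho> b (X k))) \<longlonglongrightarrow> g (\<Phi>\<rho> b x)"
      by (intro gseq bcl_tendsto[OF st_Phi_bcl[OF str]] Xx)
    moreover have "(\<lambda>k. g (\<Phi>\<rho> b (X k))) = (\<lambda>k. \<Phi>\<theta> b (g (X k)))"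
      using XD by (simp add: DPhi W0Phi flip: gW0)
    moreover have "(\<lambda>k. \<Phi>\<theta> b (g (X k))) \<longlonglongrightarrow> \<Phi>\<theta> b (g x)"
      by (intro bcl_tendsto[OF st_Phi_bcl[OF stt]] gseq Xx)
    ultimately show ?thesis using LIMSEQ_unique by metis
  qed
  have gbcl: "bounded_clinear g"
    unfolding bounded_clinear_def using gadd gsc gnorm by (auto intro!: exI[of _ 1])
  have gon: "onorm g \<le> 1"
    unfolding onorm_def
  proof (rule cSUP_least)
    fix x :: 'r
    show "norm (g x) / norm x \<le> 1"
    proof (cases "x = 0")
      case True then show ?thesis by simp
    next
      case False then show ?thesis using gnorm[of x] by simp
    qed
  qed simp
  have gV: "g (V\<rho> i \<xi>) = V\<theta> i \<xi>" if i: "i \<in> {1..n}" for i \<xi>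
  proof -
    define z where "z = g (V\<rho> i \<xi>) - V\<theta> i \<xi>"
    have "\<Phi>\<theta> b z = 0" for b
    proof -
      let ?\<xi> = "\<lambda>p. if snd p = i then \<xi> else 0"
      have "\<Phi>\<rho> b (V\<rho> i \<xi>) = R 1 (\<lambda>_. b) ?\<xi>" unfolding R_def by (rule repr_single[OF str i])
      moreover have "\<Phi>\<theta> b (V\<theta> i \<xi>) = T 1 (\<lambda>_. b) ?\<xi>" unfolding T_def by (rule repr_single[OF stt i])
      moreover have "R 1 (\<lambda>_. b) ?\<xi> \<in> D" unfolding D_def by blast
      ultimately have "g (\<Phi>\<rho> b (V\<rho> i \<xi>)) = \<Phi>\<theta> b (V\<theta> i \<xi>)"
        by (metis W0R gW0)
      then show ?thesis
        unfolding z_def by (simp add: bcl_diff[OF st_Phi_bcl[OF stt]] gPhi)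
    qed
    then have "z = 0" by (rule orth_zero[OF stt])
    then show ?thesis unfolding z_def by simp
  qed
  show ?thesis
    using gbcl gon gV gPhi by (intro exI[of _ g]) (auto simp: fun_eq_iff)
qed

end
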